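(* Let $p\ge 7$ be a prime. Then $$\sum_{k=1}^{p-1}\frac{H_k^2}{k^2}\equiv 0,\qquad \sum_{k=1}^{p-1}\frac{H_k H_{k,2}}{k}\equiv 0,\qquad \sum_{k=1}^{p-1}\frac{H_k^3}{k}\equiv 0\pmod{p}.$$
   Context: For positive integers $n,m$, $H_{n,m}=\sum_{k=1}^n 1/k^m$ and $H_n=H_{n,1}$. Congruences modulo $p$ are taken in the ring of rationals with denominators not divisible by $p$. *)

theory Defs
  imports "HOL-Number_Theory.Number_Theory"
begin

definition harm :: "nat \<Rightarrow> nat \<Rightarrow> rat" where
  "harm n m = (\<Sum>k=1..n. 1 / (of_nat k) ^ m)"

definition p_integral :: "nat \<Rightarrow> rat \<Rightarrow> bool" where
  "p_integral p x = (\<not> int p dvd snd (quotient_of x))"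

definition rat_cong :: "rat \<Rightarrow> rat \<Rightarrow> nat \<Rightarrow> bool" where
  "rat_cong x y p = (\<exists>z. p_integral p z \<and> x - y = of_nat p * z)"

end

theory Submission
  imports Defs
begin

context fixes p :: nat assumes prp: "prime p"
begin

lemma pint_iff: "p_integral p x \<longleftrightarrow> (\<exists>a b. \<not> int p dvd b \<and> x = of_int a / of_int b)"
proof
  assume "p_integral p x"
  then show "\<exists>a b. \<not> int p dvd b \<and> x = of_int a / of_int b"
    unfolding p_integral_def
    using quotient_of_div[of x "fst (quotient_of x)" "snd (quotient_of x)"] by auto
next
  assume "\<exists>a b. \<not> int p dvd b \<and> x = of_int a / of_int b"
  then obtain a b where nb: "\<not> int p dvd b" and x: "x = of_int a / of_int b" by blast
  have b0: "b \<noteq> 0" using nb by auto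
  obtain a' b' where q: "quotient_of x = (a', b')" by (cases "quotient_of x")
  have x': "x = of_int a' / of_int b'" using quotient_of_div[OF q] .
  have b'0: "b' > 0" using quotient_of_denom_pos[OF q] .
  have cop: "coprime a' b'" using quotient_of_coprime[OF q] .
  have "of_int a' / of_int b' = (of_int a / of_int b :: rat)" using x x' by simp
  then have "of_int (a' * b) = (of_int (a * b') :: rat)"
    using b0 b'0 by (simp add: field_simps)
  then have e: "a' * b = a * b'" by (simp only: of_int_eq_iff)
  have "b' dvd a' * b" by (simp add: e)
  then have "b' dvd b" using cop coprime_dvd_mult_right_iff[of b' a' b] coprime_commute[of a' b'] by simp
  then have "\<not> int p dvd b'" using nb dvd_trans by blast
  then show "p_integral p x" unfolding p_integral_def q by simp
qed

lemma pint_intro: "\<not> int p dvd b \<Longrightarrow> x = of_int a / of_int b \<Longrightarrow> p_integral p x"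
  using pint_iff by blast

lemma pint_int[simp]: "p_integral p (of_int a)"
proof -
  have "\<not> int p dvd 1" using prime_gt_1_nat[OF prp] by simp
  then show ?thesis by (intro pint_intro[of 1 _ a]) auto
qed

lemma pint_nat[simp]: "p_integral p (of_nat a)"
  using pint_int[of "int a"] by simp

lemma pint_0[simp]: "p_integral p 0" using pint_int[of 0] by simp
lemma pint_1[simp]: "p_integral p 1" using pint_int[of 1] by simp

lemma pint_add[intro]: "p_integral p x \<Longrightarrow> p_integral p y \<Longrightarrow> p_integral p (x + y)"
proof -
  assume "p_integral p x" "p_integral p y"
  then obtain a b c d where b: "\<not> int p dvd b" "x = of_int a / of_int b"
    and d: "\<not> int p dvd d" "y = of_int c / of_int d" using pint_iff by meson
  have pr: "prime (int p)" using prp by simp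
  have "\<not> int p dvd b * d" using b d pr by (simp add: prime_dvd_mult_iff)
  moreover have "b \<noteq> 0" "d \<noteq> 0" using b d by auto
  moreover have "x + y = of_int (a*d + c*b) / of_int (b*d)"
    using b d calculation by (simp add: field_simps)
  ultimately show ?thesis by (intro pint_intro[of "b*d" _ "a*d + c*b"]) simp_all
qed

lemma pint_mult[intro]: "p_integral p x \<Longrightarrow> p_integral p y \<Longrightarrow> p_integral p (x * y)"
proof -
  assume "p_integral p x" "p_integral p y"
  then obtain a b c d where b: "\<not> int p dvd b" "x = of_int a / of_int b"
    and d: "\<not> int p dvd d" "y = of_int c / of_int d" using pint_iff by meson
  have pr: "prime (int p)" using prp by simp
  have "\<not> int p dvd b * d" using b d pr by (simp add: prime_dvd_mult_iff)
  moreover have "x * y = of_int (a*c) / of_int (b*d)"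
    using b d by (auto simp: field_simps)
  ultimately show ?thesis by (rule pint_intro)
qed

lemma pint_minus[intro]: "p_integral p x \<Longrightarrow> p_integral p (- x)"
  using pint_mult[OF pint_int[of "-1"], of x] by simp

lemma pint_diff[intro]: "p_integral p x \<Longrightarrow> p_integral p y \<Longrightarrow> p_integral p (x - y)"
  using pint_add[of x "-y"] pint_minus by simp

lemma pint_power[intro]: "p_integral p x \<Longrightarrow> p_integral p (x ^ n)"
  by (induction n) auto

lemma pint_sum[intro]: "(\<And>k. k \<in> A \<Longrightarrow> p_integral p (f k)) \<Longrightarrow> p_integral p (sum f A)"
  by (induction A rule: infinite_finite_induct) auto

lemma pint_inv_nat: "0 < k \<Longrightarrow> k < p \<Longrightarrow> p_integral p (1 / of_nat k)"
proof -
  assume k: "0 < k" "k < p"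
  have "\<not> p dvd k" using k by (auto dest: dvd_imp_le)
  then have "\<not> int p dvd int k" by simp
  then show ?thesis by (intro pint_intro[of "int k" _ 1]) auto
qed

lemma pint_div_nat[intro]: "p_integral p x \<Longrightarrow> 0 < k \<Longrightarrow> k < p \<Longrightarrow> p_integral p (x / of_nat k)"
proof -
  assume "p_integral p x" "0 < k" "k < p"
  then have "p_integral p (x * (1 / of_nat k))" using pint_mult pint_inv_nat by blast
  then show ?thesis by simp
qed

lemma pint_div_int: "p_integral p x \<Longrightarrow> \<not> int p dvd c \<Longrightarrow> p_integral p (x / of_int c)"
proof -
  assume x: "p_integral p x" and c: "\<not> int p dvd c"
  have "p_integral p (1 / of_int c)" by (rule pint_intro[OF c, of _ 1]) simp
  then have "p_integral p (x * (1 / of_int c))" using pint_mult[OF x] by blast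
  then show ?thesis by simp
qed

lemma rc_iff: "rat_cong x y p \<longleftrightarrow> p_integral p ((x - y) / of_nat p)"
proof -
  have p0: "(of_nat p :: rat) \<noteq> 0" using prp by (simp add: prime_gt_0_nat)
  show ?thesis unfolding rat_cong_def
  proof
    assume "\<exists>z. p_integral p z \<and> x - y = of_nat p * z"
    then obtain z where "p_integral p z" "x - y = of_nat p * z" by blast
    then show "p_integral p ((x - y) / of_nat p)" using p0 by simp
  next
    assume "p_integral p ((x - y) / of_nat p)"
    then show "\<exists>z. p_integral p z \<and> x - y = of_nat p * z"
      using p0 by (intro exI[of _ "(x - y) / of_nat p"]) simp
  qed
qed

lemma rc_refl[simp]: "rat_cong x x p" by (simp add: rc_iff)
lemma rc_eq: "x = y \<Longrightarrow> rat_cong x y p" by simp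

lemma rc_sym: "rat_cong x y p \<Longrightarrow> rat_cong y x p"
proof -
  assume "rat_cong x y p"
  then have "p_integral p (- ((x - y) / of_nat p))" unfolding rc_iff by (rule pint_minus)
  then show ?thesis unfolding rc_iff by (simp add: minus_divide_left)
qed

lemma rc_add: "rat_cong x y p \<Longrightarrow> rat_cong u v p \<Longrightarrow> rat_cong (x + u) (y + v) p"
proof -
  assume "rat_cong x y p" "rat_cong u v p"
  then have "p_integral p ((x - y) / of_nat p + (u - v) / of_nat p)" unfolding rc_iff by (rule pint_add)
  then show ?thesis unfolding rc_iff by (simp add: add_divide_distrib[symmetric] algebra_simps)
qed

lemma rc_trans: "rat_cong x y p \<Longrightarrow> rat_cong y z p \<Longrightarrow> rat_cong x z p"
  using rc_add[of x y y z] unfolding rc_iff by simp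

lemma rc_minus: "rat_cong x y p \<Longrightarrow> rat_cong (- x) (- y) p"
proof -
  assume "rat_cong x y p"
  then have "p_integral p (- ((x - y) / of_nat p))" unfolding rc_iff by (rule pint_minus)
  then show ?thesis unfolding rc_iff by (simp add: minus_divide_left algebra_simps)
qed

lemma rc_diff: "rat_cong x y p \<Longrightarrow> rat_cong u v p \<Longrightarrow> rat_cong (x - u) (y - v) p"
  using rc_add[OF _ rc_minus, of x y u v] by simp

lemma rc_mult: "rat_cong x y p \<Longrightarrow> rat_cong u v p \<Longrightarrow> p_integral p y \<Longrightarrow> p_integral p u
   \<Longrightarrow> rat_cong (x * u) (y * v) p"
proof -
  assume a: "rat_cong x y p" "rat_cong u v p" "p_integral p y" "p_integral p u"
  have p0: "(of_nat p :: rat) \<noteq> 0" using prp by (simp add: prime_gt_0_nat)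
  have "(x*u - y*v)/of_nat p = ((x - y)/of_nat p) * u + y * ((u - v)/ of_nat p)"
    using p0 by (simp add: field_simps)
  moreover have "p_integral p (((x - y)/of_nat p) * u + y * ((u - v)/ of_nat p))"
    using a unfolding rc_iff by (intro pint_add pint_mult)
  ultimately show ?thesis unfolding rc_iff by simp
qed

lemma rc_multc: "rat_cong x y p \<Longrightarrow> p_integral p c \<Longrightarrow> rat_cong (c * x) (c * y) p"
proof -
  assume "rat_cong x y p" "p_integral p c"
  then have "p_integral p (c * ((x - y) / of_nat p))" unfolding rc_iff by (intro pint_mult)
  then show ?thesis unfolding rc_iff by (simp add: algebra_simps)
qed

lemma rc_pint: "rat_cong x y p \<Longrightarrow> p_integral p y \<Longrightarrow> p_integral p x"
proof -
  assume a: "rat_cong x y p" "p_integral p y"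
  have "x = of_nat p * ((x - y) / of_nat p) + y" using prp by (simp add: prime_gt_0_nat)
  moreover have "p_integral p (of_nat p * ((x - y) / of_nat p) + y)"
    using a unfolding rc_iff by (intro pint_add pint_mult pint_nat)
  ultimately show ?thesis by simp
qed

lemma rc_sum: "(\<And>k. k \<in> A \<Longrightarrow> rat_cong (f k) (g k) p) \<Longrightarrow> rat_cong (sum f A) (sum g A) p"
  by (induction A rule: infinite_finite_induct) (auto intro: rc_add)

lemma rc_power: "rat_cong x y p \<Longrightarrow> p_integral p y \<Longrightarrow> rat_cong (x ^ n) (y ^ n) p"
proof (induction n)
  case (Suc n)
  then show ?case using rc_mult[of x y "x^n" "y^n"] rc_pint[of x y] by (auto simp: mult.commute)
qed simp

lemma rc_pz: "p_integral p z \<Longrightarrow> rat_cong (of_nat p * z) 0 p"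
  unfolding rc_iff using prp by (simp add: prime_gt_0_nat)

lemma rc_cancel: "rat_cong (of_int c * x) 0 p \<Longrightarrow> \<not> int p dvd c \<Longrightarrow> rat_cong x 0 p"
proof -
  assume a: "rat_cong (of_int c * x) 0 p" "\<not> int p dvd c"
  have c0: "c \<noteq> 0" using a by auto
  have e: "x / of_nat p = (of_int c * x / of_nat p) / of_int c" using c0 by simp
  have "p_integral p (of_int c * x / of_nat p)" using a(1) unfolding rc_iff by simp
  then have "p_integral p ((of_int c * x / of_nat p) / of_int c)" using pint_div_int a(2) by blast
  then show ?thesis unfolding rc_iff using e by simp
qed

end

context fixes p :: nat assumes prp: "prime p"
begin

lemma rc_int_dvd: "int p dvd a \<Longrightarrow> rat_cong (of_int a) 0 p"
proof -
  assume "int p dvd a"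
  then obtain c where "a = int p * c" by blast
  then have "of_int a = of_nat p * (of_int c :: rat)" by simp
  then show ?thesis using rc_pz[OF prp, of "of_int c"] pint_int[OF prp] by simp
qed

definition invp :: "nat \<Rightarrow> nat" where "invp k = (k ^ (p - 2)) mod p"

lemma inv_prop:
  assumes k: "0 < k" "k < p"
  shows "0 < invp k" "invp k < p" "[k * invp k = 1] (mod p)"
proof -
  have p2: "p \<ge> 2" using prime_ge_2_nat[OF prp] .
  have nd: "\<not> p dvd k" using k by (auto dest: dvd_imp_le)
  have "[k * invp k = k * k ^ (p - 2)] (mod p)"
    by (simp add: cong_def invp_def mod_mult_right_eq)
  moreover have "k * k ^ (p - 2) = k ^ (p - 1)"
  proof -
    have "p - 1 = Suc (p - 2)" using p2 by simp
    then show ?thesis by (simp only: power_Suc)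
  qed
  moreover have "[k ^ (p - 1) = 1] (mod p)" using fermat_theorem[OF prp nd] .
  ultimately show c: "[k * invp k = 1] (mod p)" using cong_trans by simp
  show "invp k < p" unfolding invp_def using p2 by simp
  show "0 < invp k"
  proof (rule ccontr)
    assume "\<not> 0 < invp k"
    then have "invp k = 0" by simp
    then have "[0 = 1] (mod p)" using c by simp
    then show False using p2 by (simp add: cong_def)
  qed
qed

lemma inv_bij: "bij_betw invp {1..p-1} {1..p-1}"
proof -
  have mem: "0 < k \<and> k < p" if "k \<in> {1..p-1}" for k
    using that prime_gt_0_nat[OF prp] by auto
  have maps: "invp ` {1..p-1} \<subseteq> {1..p-1}"
  proof
    fix y assume "y \<in> invp ` {1..p-1}"
    then obtain k where k: "k \<in> {1..p-1}" "y = invp k" by blast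
    have "0 < invp k" "invp k < p" using inv_prop(1,2) mem[OF k(1)] by auto
    then show "y \<in> {1..p-1}" using k(2) by simp
  qed
  have inj: "inj_on invp {1..p-1}"
  proof (rule inj_onI)
    fix a b assume a: "a \<in> {1..p-1}" and b: "b \<in> {1..p-1}" and e: "invp a = invp b"
    have a': "0 < a" "a < p" using mem[OF a] by auto
    have b': "0 < b" "b < p" using mem[OF b] by auto
    have c1: "[a * (b * invp b) = a * 1] (mod p)" using inv_prop(3)[OF b'] by (rule cong_scalar_left)
    have c2: "[b * (a * invp a) = b * 1] (mod p)" using inv_prop(3)[OF a'] by (rule cong_scalar_left)
    have "a * (b * invp b) = b * (a * invp a)" using e by simp
    then have "[a * 1 = b * 1] (mod p)" using c1 c2 cong_sym cong_trans by metis
    then have "[a = b] (mod p)" by simp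
    then show "a = b" using a' b' by (simp add: cong_def)
  qed
  have "invp ` {1..p-1} = {1..p-1}"
    by (rule endo_inj_surj[OF _ maps inj]) simp
  then show ?thesis using inj by (simp add: bij_betw_def)
qed

lemma rc_recip_pow:
  assumes k: "0 < k" "k < p"
  shows "rat_cong (1 / of_nat k ^ m) (of_nat (invp k) ^ m) p"
proof -
  have "[(k * invp k) ^ m = 1 ^ m] (mod p)" using inv_prop(3)[OF k] by (rule cong_pow)
  then have "[(k * invp k) ^ m = 1] (mod p)" by simp
  moreover have "(k * invp k) ^ m \<ge> 1" using inv_prop(1)[OF k] k by simp
  ultimately have "p dvd (k * invp k) ^ m - 1" using cong_altdef_nat by blast
  then obtain c where c: "(k * invp k) ^ m - 1 = p * c" by blast
  have c': "(k * invp k) ^ m = p * c + 1" using c \<open>(k * invp k) ^ m \<ge> 1\<close> by simp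
  have k0: "(of_nat k :: rat) \<noteq> 0" using k by simp
  have "1 / of_nat k ^ m - of_nat (invp k) ^ m
        = (1 - of_nat ((k * invp k) ^ m)) / (of_nat k ^ m :: rat)"
    using k0 by (simp add: field_simps power_mult_distrib)
  also have "\<dots> = of_nat p * (- of_nat c * (1 / of_nat k) ^ m)"
    unfolding c' by (simp add: field_simps)
  finally have e: "1 / of_nat k ^ m - of_nat (invp k) ^ m = of_nat p * (- of_nat c * (1 / of_nat k) ^ m :: rat)" .
  have "p_integral p (- of_nat c * (1 / of_nat k) ^ m)"
    using pint_inv_nat[OF prp k] pint_nat[OF prp] by (intro pint_mult[OF prp] pint_power[OF prp] pint_minus[OF prp]) simp_all
  then show ?thesis unfolding rat_cong_def using e by blast
qed

lemma powsum_recip: "rat_cong (\<Sum>k=1..p-1. 1 / of_nat k ^ m) (\<Sum>k=1..p-1. of_nat k ^ m) p"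
proof -
  have "rat_cong (\<Sum>k=1..p-1. 1 / of_nat k ^ m) (\<Sum>k=1..p-1. of_nat (invp k) ^ m) p"
  proof (rule rc_sum[OF prp])
    fix k assume "k \<in> {1..p-1}"
    then have "0 < k" "k < p" using prime_gt_0_nat[OF prp] by auto
    then show "rat_cong (1 / of_nat k ^ m) (of_nat (invp k) ^ m) p" by (rule rc_recip_pow)
  qed
  moreover have "(\<Sum>k=1..p-1. (of_nat (invp k) :: rat) ^ m) = (\<Sum>k=1..p-1. of_nat k ^ m)"
    by (rule sum.reindex_bij_betw[OF inv_bij])
  ultimately show ?thesis by simp
qed

end

lemma ps1: "2 * (\<Sum>k=1..n. (int k)) = int n * (int n + 1)"
  by (induction n) (auto simp: algebra_simps)
lemma ps2: "6 * (\<Sum>k=1..n. (int k)^2) = int n * (int n + 1) * (2 * int n + 1)"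
  by (induction n) (auto simp: algebra_simps power2_eq_square)
lemma ps3: "4 * (\<Sum>k=1..n. (int k)^3) = (int n * (int n + 1))^2"
  by (induction n) (auto simp: algebra_simps power2_eq_square power3_eq_cube)
lemma ps4: "30 * (\<Sum>k=1..n. (int k)^4) = int n * (int n + 1) * (2 * int n + 1) * (3 * int n ^ 2 + 3 * int n - 1)"
  by (induction n) (auto simp: algebra_simps power2_eq_square power3_eq_cube power4_eq_xxxx)

context fixes p :: nat assumes prp: "prime p" and p7: "p \<ge> 7"
begin

lemma ndvd_small: "c \<in> {2,3,5} \<Longrightarrow> \<not> int p dvd c"
proof -
  assume c: "c \<in> {2,3,5}"
  show ?thesis
  proof
    assume "int p dvd c"
    moreover have "0 < c" using c by auto
    ultimately have "int p \<le> c" by (rule zdvd_imp_le)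
    then show False using c p7 by auto
  qed
qed

lemma pdvd_cancel: "int p dvd c * s \<Longrightarrow> \<not> int p dvd c \<Longrightarrow> int p dvd s"
proof -
  have "prime (int p)" using prp by simp
  then show "int p dvd c * s \<Longrightarrow> \<not> int p dvd c \<Longrightarrow> int p dvd s" by (simp add: prime_dvd_mult_iff)
qed

lemma harm_ps: "rat_cong (harm (p-1) m) (of_int (\<Sum>k=1..p-1. int k ^ m)) p"
proof -
  have "rat_cong (harm (p-1) m) (\<Sum>k=1..p-1. of_nat k ^ m) p"
    unfolding harm_def by (rule powsum_recip[OF prp])
  moreover have "(\<Sum>k=1..p-1. (of_nat k :: rat) ^ m) = of_int (\<Sum>k=1..p-1. int k ^ m)"
    by simp
  ultimately show ?thesis by simp
qed

lemma harm_p0: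
  assumes m: "1 \<le> m" "m \<le> 4"
  shows "rat_cong (harm (p-1) m) 0 p"
proof -
  define n where "n = p - 1"
  have np: "int n + 1 = int p" using p7 unfolding n_def by simp
  have d2: "\<not> int p dvd 2" "\<not> int p dvd 3" "\<not> int p dvd 5" using ndvd_small by auto
  have "int p dvd (\<Sum>k=1..n. int k ^ m)"
  proof -
    have "m = 1 \<or> m = 2 \<or> m = 3 \<or> m = 4" using m by auto
    then show ?thesis
    proof (elim disjE)
      assume m1: "m = 1"
      have e: "2 * (\<Sum>k=1..n. int k) = int n * int p" using ps1[of n] unfolding np .
      have "int p dvd 2 * (\<Sum>k=1..n. int k)" unfolding e by (rule dvd_triv_right)
      then have "int p dvd (\<Sum>k=1..n. int k)" using pdvd_cancel[OF _ d2(1)] by blast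
      then show ?thesis using m1 by simp
    next
      assume m2: "m = 2"
      have e: "6 * (\<Sum>k=1..n. int k ^ 2) = int n * int p * (2 * int n + 1)" using ps2[of n] unfolding np .
      have "int p dvd 6 * (\<Sum>k=1..n. int k ^ 2)" unfolding e by (intro dvd_mult2 dvd_triv_right)
      then have "int p dvd 2 * (3 * (\<Sum>k=1..n. int k ^ 2))" by simp
      then have "int p dvd 3 * (\<Sum>k=1..n. int k ^ 2)" using pdvd_cancel[OF _ d2(1)] by blast
      then have "int p dvd (\<Sum>k=1..n. int k ^ 2)" using pdvd_cancel[OF _ d2(2)] by blast
      then show ?thesis using m2 by simp
    next
      assume m3: "m = 3"
      have e: "4 * (\<Sum>k=1..n. int k ^ 3) = (int n * int p)^2" using ps3[of n] unfolding np .
      have "int p dvd 4 * (\<Sum>k=1..n. int k ^ 3)" unfolding e power2_eq_square by (intro dvd_mult2 dvd_triv_right)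
      then have "int p dvd 2 * (2 * (\<Sum>k=1..n. int k ^ 3))" by simp
      then have "int p dvd 2 * (\<Sum>k=1..n. int k ^ 3)" using pdvd_cancel[OF _ d2(1)] by blast
      then have "int p dvd (\<Sum>k=1..n. int k ^ 3)" using pdvd_cancel[OF _ d2(1)] by blast
      then show ?thesis using m3 by simp
    next
      assume m4: "m = 4"
      have e: "30 * (\<Sum>k=1..n. int k ^ 4) = int n * int p * (2 * int n + 1) * (3 * int n ^ 2 + 3 * int n - 1)"
        using ps4[of n] unfolding np .
      have "int p dvd 30 * (\<Sum>k=1..n. int k ^ 4)" unfolding e by (intro dvd_mult2 dvd_triv_right)
      then have "int p dvd 2 * (3 * (5 * (\<Sum>k=1..n. int k ^ 4)))" by simp
      then have "int p dvd 3 * (5 * (\<Sum>k=1..n. int k ^ 4))" using pdvd_cancel[OF _ d2(1)] by blast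
      then have "int p dvd 5 * (\<Sum>k=1..n. int k ^ 4)" using pdvd_cancel[OF _ d2(2)] by blast
      then have "int p dvd (\<Sum>k=1..n. int k ^ 4)" using pdvd_cancel[OF _ d2(3)] by blast
      then show ?thesis using m4 by simp
    qed
  qed
  then have "rat_cong (of_int (\<Sum>k=1..p-1. int k ^ m)) 0 p" using rc_int_dvd[OF prp] unfolding n_def by blast
  then show ?thesis using rc_trans[OF prp harm_ps] by blast
qed

end

lemma harm_0[simp]: "harm 0 m = 0" by (simp add: harm_def)
lemma harm_Suc: "harm (Suc n) m = harm n m + (1 / of_nat (Suc n)) ^ m"
  by (simp add: harm_def power_one_over)

lemma telescope: assumes "\<And>j. g (Suc j) = F (Suc j) - F j"
  shows "(\<Sum>k=1..n. g k) = F n - (F 0 :: rat)"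
  by (induction n) (simp_all add: assms)

lemma harm_Suc': "harm (Suc n) m = harm n m + (inverse (of_nat (Suc n))) ^ m"
  unfolding harm_Suc by (simp add: inverse_eq_divide)
lemma dpow: "(a::rat) / c ^ j = a * (inverse c) ^ j"
  by (simp add: divide_inverse power_inverse)
lemma dpow1: "(a::rat) / c = a * (inverse c)"
  by (simp add: divide_inverse)

lemma alg1: "4*(y+x)^3*x - 6*(y+x)^2*x^2 + 4*(y+x)*x^3 = ((y+x)^4 + x^4) - (y::rat)^4"
  by (simp add: eval_nat_numeral algebra_simps)

lemma E1c: "(\<Sum>k=1..n. 4 * ((harm k 1)^3 / of_nat k) - 6 * ((harm k 1)^2 / (of_nat k)^2)
   + 4 * (harm k 1 / (of_nat k)^3)) = (harm n 1)^4 + harm n 4"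
proof -
  have "(\<Sum>k=1..n. 4 * ((harm k 1)^3 / of_nat k) - 6 * ((harm k 1)^2 / (of_nat k)^2)
   + 4 * (harm k 1 / (of_nat k)^3)) = ((harm n 1)^4 + harm n 4) - ((harm 0 1)^4 + harm 0 4)"
  proof (rule telescope)
    fix j
    define x :: rat where "x = inverse (of_nat (Suc j))"
    define y where "y = harm j 1"
    have h1: "harm (Suc j) 1 = y + x" unfolding y_def x_def harm_Suc' by simp
    have h4: "harm (Suc j) 4 = harm j 4 + x ^ 4" unfolding x_def harm_Suc' by simp
    have a: "4*(y+x)^3*x - 6*(y+x)^2*x^2 + 4*(y+x)*x^3 = ((y+x)^4 + x^4) - y^4"
      by (rule alg1)
    show "4 * ((harm (Suc j) 1)^3 / of_nat (Suc j)) - 6 * ((harm (Suc j) 1)^2 / (of_nat (Suc j))^2)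
   + 4 * (harm (Suc j) 1 / (of_nat (Suc j))^3) = ((harm (Suc j) 1)^4 + harm (Suc j) 4) - ((harm j 1)^4 + harm j 4)"
      unfolding dpow[of _ "of_nat (Suc j)"] dpow1[of _ "of_nat (Suc j)"] x_def[symmetric] h1 h4 y_def[symmetric]
      using a by (simp add: algebra_simps)
  qed
  then show ?thesis by simp
qed


lemma alg2: "(y+x)^2*x^2 + 2*((y+x)*(g+x^2)*x) - 2*((y+x)*x^3) - (g+x^2)*x^2
   = ((y+x)^2*(g+x^2) - (h+x^4)) - (y^2*g - (h::rat))"
  by (simp add: eval_nat_numeral algebra_simps)
lemma alg3: "2*((g+x^2)*x^2) = ((g+x^2)^2 + (h+x^4)) - (g^2 + (h::rat))"
  by (simp add: eval_nat_numeral algebra_simps)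
lemma alg4: "(t+x^3)*x + (y+x)*x^3 = ((y+x)*(t+x^3) + (h+x^4)) - (y*t+(h::rat))"
  by (simp add: eval_nat_numeral algebra_simps)
lemma alg5: "(y+x)*x = ((y+x)^2 + (g+x^2))/2 - (y^2+(g::rat))/2"
  by (simp add: eval_nat_numeral algebra_simps)

lemma E2c: "(\<Sum>k=1..n. (harm k 1)^2 / (of_nat k)^2 + 2 * (harm k 1 * harm k 2 / of_nat k)
   - 2 * (harm k 1 / (of_nat k)^3) - harm k 2 / (of_nat k)^2) = (harm n 1)^2 * harm n 2 - harm n 4"
proof -
  have "(\<Sum>k=1..n. (harm k 1)^2 / (of_nat k)^2 + 2 * (harm k 1 * harm k 2 / of_nat k)
   - 2 * (harm k 1 / (of_nat k)^3) - harm k 2 / (of_nat k)^2)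
    = ((harm n 1)^2 * harm n 2 - harm n 4) - ((harm 0 1)^2 * harm 0 2 - harm 0 4)"
  proof (rule telescope)
    fix j
    define x :: rat where "x = inverse (of_nat (Suc j))"
    have h1: "harm (Suc j) 1 = harm j 1 + x" unfolding x_def harm_Suc' by simp
    have h2: "harm (Suc j) 2 = harm j 2 + x^2" unfolding x_def harm_Suc' by simp
    have h4: "harm (Suc j) 4 = harm j 4 + x ^ 4" unfolding x_def harm_Suc' by simp
    note a = alg2[of "harm j 1" x "harm j 2" "harm j 4"]
    show "(harm (Suc j) 1)^2 / (of_nat (Suc j))^2 + 2 * (harm (Suc j) 1 * harm (Suc j) 2 / of_nat (Suc j))
   - 2 * (harm (Suc j) 1 / (of_nat (Suc j))^3) - harm (Suc j) 2 / (of_nat (Suc j))^2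
    = ((harm (Suc j) 1)^2 * harm (Suc j) 2 - harm (Suc j) 4) - ((harm j 1)^2 * harm j 2 - harm j 4)"
      unfolding dpow[of _ "of_nat (Suc j)"] dpow1[of _ "of_nat (Suc j)"] x_def[symmetric] h1 h2 h4
      using a by (simp add: algebra_simps)
  qed
  then show ?thesis by simp
qed

lemma E3c: "(\<Sum>k=1..n. 2 * (harm k 2 / (of_nat k)^2)) = (harm n 2)^2 + harm n 4"
proof -
  have "(\<Sum>k=1..n. 2 * (harm k 2 / (of_nat k)^2))
    = ((harm n 2)^2 + harm n 4) - ((harm 0 2)^2 + harm 0 4)"
  proof (rule telescope)
    fix j
    define x :: rat where "x = inverse (of_nat (Suc j))"
    have h2: "harm (Suc j) 2 = harm j 2 + x^2" unfolding x_def harm_Suc' by simp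
    have h4: "harm (Suc j) 4 = harm j 4 + x ^ 4" unfolding x_def harm_Suc' by simp
    note a = alg3[of "harm j 2" x "harm j 4"]
    show "2 * (harm (Suc j) 2 / (of_nat (Suc j))^2)
    = ((harm (Suc j) 2)^2 + harm (Suc j) 4) - ((harm j 2)^2 + harm j 4)"
      unfolding dpow[of _ "of_nat (Suc j)"] x_def[symmetric] h2 h4
      using a by (simp add: algebra_simps)
  qed
  then show ?thesis by simp
qed

lemma E4c: "(\<Sum>k=1..n. harm k 3 / of_nat k + harm k 1 / (of_nat k)^3) = harm n 1 * harm n 3 + harm n 4"
proof -
  have "(\<Sum>k=1..n. harm k 3 / of_nat k + harm k 1 / (of_nat k)^3)
    = (harm n 1 * harm n 3 + harm n 4) - (harm 0 1 * harm 0 3 + harm 0 4)"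
  proof (rule telescope)
    fix j
    define x :: rat where "x = inverse (of_nat (Suc j))"
    have h1: "harm (Suc j) 1 = harm j 1 + x" unfolding x_def harm_Suc' by simp
    have h3: "harm (Suc j) 3 = harm j 3 + x^3" unfolding x_def harm_Suc' by simp
    have h4: "harm (Suc j) 4 = harm j 4 + x ^ 4" unfolding x_def harm_Suc' by simp
    note a = alg4[of "harm j 3" x "harm j 1" "harm j 4"]
    show "harm (Suc j) 3 / of_nat (Suc j) + harm (Suc j) 1 / (of_nat (Suc j))^3
    = (harm (Suc j) 1 * harm (Suc j) 3 + harm (Suc j) 4) - (harm j 1 * harm j 3 + harm j 4)"
      unfolding dpow[of _ "of_nat (Suc j)"] dpow1[of _ "of_nat (Suc j)"] x_def[symmetric] h1 h3 h4
      using a by (simp add: algebra_simps)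
  qed
  then show ?thesis by simp
qed

lemma E5: "(\<Sum>m=1..n. harm m 1 / of_nat m) = ((harm n 1)^2 + harm n 2) / 2"
proof -
  have "(\<Sum>m=1..n. harm m 1 / of_nat m)
    = ((harm n 1)^2 + harm n 2) / 2 - ((harm 0 1)^2 + harm 0 2) / 2"
  proof (rule telescope)
    fix j
    define x :: rat where "x = inverse (of_nat (Suc j))"
    have h1: "harm (Suc j) 1 = harm j 1 + x" unfolding x_def harm_Suc' by simp
    have h2: "harm (Suc j) 2 = harm j 2 + x^2" unfolding x_def harm_Suc' by simp
    note a = alg5[of "harm j 1" x "harm j 2"]
    show "harm (Suc j) 1 / of_nat (Suc j)
    = ((harm (Suc j) 1)^2 + harm (Suc j) 2) / 2 - ((harm j 1)^2 + harm j 2) / 2"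
      unfolding dpow1[of _ "of_nat (Suc j)"] x_def[symmetric] h1 h2
      using a by (simp add: algebra_simps)
  qed
  then show ?thesis by simp
qed

definition T :: "(nat \<Rightarrow> rat) \<Rightarrow> nat \<Rightarrow> rat" where
  "T f n = (\<Sum>k=1..n. (-1)^(k-1) * of_nat (n choose k) * f k)"

lemma T_shift: "T f n = (\<Sum>j=0..n. (-1)^j * of_nat (n choose Suc j) * f (Suc j))"
proof -
  have "T f n = (\<Sum>k=Suc 0..Suc n. (-1)^(k-1) * of_nat (n choose k) * f k)"
    unfolding T_def by simp
  also have "\<dots> = (\<Sum>j=0..n. (-1)^j * of_nat (n choose Suc j) * f (Suc j))"
    by (subst sum.shift_bounds_cl_Suc_ivl) simp
  finally show ?thesis .
qed

lemma shiftS: "(\<Sum>k=1..Suc n. g k) = (\<Sum>j=0..n. g (Suc j))"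
  by (simp only: One_nat_def sum.shift_bounds_cl_Suc_ivl)

lemma key1: "(of_nat (n choose j) :: rat) / of_nat (Suc j) = of_nat (Suc n choose Suc j) / of_nat (Suc n)"
proof -
  have "Suc n * (n choose j) = (Suc n choose Suc j) * Suc j" by (rule Suc_times_binomial_eq)
  then have "(of_nat (Suc n) :: rat) * of_nat (n choose j) = of_nat (Suc n choose Suc j) * of_nat (Suc j)"
    by (metis of_nat_mult)
  then show ?thesis by (simp add: field_simps)
qed

lemma T_Suc_split: "T f (Suc n) = T f n + (\<Sum>j=0..n. (-1)^j * of_nat (n choose j) * f (Suc j))"
proof -
  have "T f (Suc n) = (\<Sum>j=0..n. (-1)^j * of_nat (Suc n choose Suc j) * f (Suc j))"
    unfolding T_def shiftS by simp
  also have "\<dots> = (\<Sum>j=0..n. (-1)^j * of_nat (n choose Suc j) * f (Suc j) + (-1)^j * of_nat (n choose j) * f (Suc j))"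
    by (rule sum.cong) (simp_all add: algebra_simps)
  also have "\<dots> = T f n + (\<Sum>j=0..n. (-1)^j * of_nat (n choose j) * f (Suc j))"
    unfolding sum.distrib T_shift[of f n] ..
  finally show ?thesis .
qed

lemma T_div: "(\<Sum>j=0..n. (-1)^j * of_nat (n choose j) * (h (Suc j) / of_nat (Suc j))) = T h (Suc n) / of_nat (Suc n)"
proof -
  have "(\<Sum>j=0..n. (-1)^j * of_nat (n choose j) * (h (Suc j) / of_nat (Suc j)))
     = (\<Sum>j=0..n. (-1)^j * of_nat (Suc n choose Suc j) * h (Suc j) / of_nat (Suc n))"
  proof (rule sum.cong)
    fix j
    have "(-1)^j * of_nat (n choose j) * (h (Suc j) / of_nat (Suc j))
       = (-1)^j * h (Suc j) * (of_nat (n choose j) / of_nat (Suc j) :: rat)" by simp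
    also have "\<dots> = (-1)^j * h (Suc j) * (of_nat (Suc n choose Suc j) / of_nat (Suc n))"
      by (simp only: key1)
    finally show "(-1)^j * of_nat (n choose j) * (h (Suc j) / of_nat (Suc j))
       = (-1)^j * of_nat (Suc n choose Suc j) * h (Suc j) / (of_nat (Suc n) :: rat)" by simp
  qed simp
  also have "\<dots> = (\<Sum>j=0..n. (-1)^j * of_nat (Suc n choose Suc j) * h (Suc j)) / of_nat (Suc n)"
    by (simp add: sum_divide_distrib)
  also have "(\<Sum>j=0..n. (-1)^j * of_nat (Suc n choose Suc j) * h (Suc j)) = T h (Suc n)"
    unfolding T_def shiftS by simp
  finally show ?thesis .
qed

lemma LA: "T (\<lambda>k. f k / of_nat k) n = (\<Sum>m=1..n. T f m / of_nat m)"
proof (induction n)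
  case 0
  then show ?case by (simp add: T_def)
next
  case (Suc n)
  have "T (\<lambda>k. f k / of_nat k) (Suc n) = T (\<lambda>k. f k / of_nat k) n + T f (Suc n) / of_nat (Suc n)"
    unfolding T_Suc_split T_div ..
  then show ?case using Suc.IH by simp
qed

lemma LB: "T (\<lambda>k. \<Sum>m=1..k. h m / of_nat m) (Suc n) = T h (Suc n) / of_nat (Suc n)"
proof -
  define F where "F = (\<lambda>k. \<Sum>m=1..k. h m / (of_nat m :: rat))"
  have FS: "F (Suc j) = F j + h (Suc j) / of_nat (Suc j)" for j unfolding F_def by simp
  have "(\<Sum>j=0..n. (-1)^j * of_nat (n choose j) * F (Suc j))
     = (\<Sum>j=0..n. (-1)^j * of_nat (n choose j) * F j) + (\<Sum>j=0..n. (-1)^j * of_nat (n choose j) * (h (Suc j) / of_nat (Suc j)))"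
    unfolding FS sum.distrib[symmetric] by (simp add: algebra_simps)
  also have "(\<Sum>j=0..n. (-1)^j * of_nat (n choose j) * F j) = - T F n"
  proof -
    have "(\<Sum>j=0..n. (-1)^j * of_nat (n choose j) * F j) = (\<Sum>j=Suc 0..n. (-1)^j * of_nat (n choose j) * F j)"
      by (subst sum.atLeast_Suc_atMost) (simp_all add: F_def)
    also have "\<dots> = (\<Sum>j=1..n. - ((-1)^(j-1) * of_nat (n choose j) * F j))"
    proof (rule sum.cong)
      fix j assume "j \<in> {1..n}"
      then obtain i where "j = Suc i" by (cases j) auto
      then show "(-1)^j * of_nat (n choose j) * F j = - ((-1)^(j-1) * of_nat (n choose j) * F j)" by simp
    qed simp
    also have "\<dots> = - T F n" unfolding T_def by (simp add: sum_negf)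
    finally show ?thesis .
  qed
  finally have "(\<Sum>j=0..n. (-1)^j * of_nat (n choose j) * F (Suc j)) = - T F n + T h (Suc n) / of_nat (Suc n)"
    unfolding T_div .
  then have "T F (Suc n) = T h (Suc n) / of_nat (Suc n)" unfolding T_Suc_split by simp
  then show ?thesis unfolding F_def .
qed

lemma T1: "T (\<lambda>k. 1) (Suc n) = 1"
proof -
  have "(\<Sum>i\<le>Suc n. (-1)^i * of_nat (Suc n choose i)) = (0::rat)"
    by (rule choose_alternating_sum) simp
  then have "(\<Sum>i=0..Suc n. (-1)^i * of_nat (Suc n choose i)) = (0::rat)"
    by (simp add: atMost_atLeast0)
  then have "1 + (\<Sum>i=Suc 0..Suc n. (-1)^i * of_nat (Suc n choose i)) = (0::rat)"
    by (subst (asm) sum.atLeast_Suc_atMost) simp_all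
  moreover have "(\<Sum>i=Suc 0..Suc n. (-1)^i * of_nat (Suc n choose i)) = - T (\<lambda>k. 1) (Suc n)"
  proof -
    have "(\<Sum>i=Suc 0..Suc n. (-1)^i * of_nat (Suc n choose i)) = (\<Sum>i=Suc 0..Suc n. - ((-1)^(i-1) * of_nat (Suc n choose i) * (1::rat)))"
    proof (rule sum.cong)
      fix j assume "j \<in> {Suc 0..Suc n}"
      then obtain i where "j = Suc i" by (cases j) auto
      then show "(-1)^j * of_nat (Suc n choose j) = - ((-1)^(j-1) * of_nat (Suc n choose j) * (1::rat))" by simp
    qed simp
    also have "\<dots> = - T (\<lambda>k. 1) (Suc n)" unfolding T_def by (simp add: sum_negf)
    finally show ?thesis .
  qed
  ultimately show ?thesis by simp
qed

lemma dual: "T (\<lambda>k. ((harm k 1)^2 + harm k 2) / 2 / (of_nat k)^2) n = (\<Sum>m=1..n. harm m 3 / of_nat m)"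
proof -
  have H: "harm k 1 = (\<Sum>m=1..k. 1 / of_nat m)" for k unfolding harm_def by simp
  have TH: "T (\<lambda>k. harm k 1) (Suc n) = 1 / of_nat (Suc n)" for n
    unfolding H using LB[of "\<lambda>_. 1" n] T1 by simp
  have f2: "((harm k 1)^2 + harm k 2) / 2 = (\<Sum>m=1..k. harm m 1 / of_nat m)" for k
    using E5 by simp
  have Tf2: "T (\<lambda>k. ((harm k 1)^2 + harm k 2) / 2) (Suc n) = 1 / of_nat (Suc n) ^ 2" for n
    unfolding f2 LB TH by (simp add: power2_eq_square)
  have Tf3: "T (\<lambda>k. ((harm k 1)^2 + harm k 2) / 2 / of_nat k) n = harm n 3" for n
  proof -
    have "T (\<lambda>k. ((harm k 1)^2 + harm k 2) / 2 / of_nat k) n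
       = (\<Sum>m=1..n. T (\<lambda>k. ((harm k 1)^2 + harm k 2) / 2) m / of_nat m)" by (rule LA)
    also have "\<dots> = (\<Sum>m=1..n. 1 / of_nat m ^ 3)"
    proof (rule sum.cong)
      fix m assume "m \<in> {1..n}"
      then obtain i where m: "m = Suc i" by (cases m) auto
      show "T (\<lambda>k. ((harm k 1)^2 + harm k 2) / 2) m / of_nat m = 1 / of_nat m ^ 3"
        unfolding m Tf2 by (simp add: power2_eq_square power3_eq_cube)
    qed simp
    finally show ?thesis unfolding harm_def .
  qed
  have "T (\<lambda>k. ((harm k 1)^2 + harm k 2) / 2 / (of_nat k)^2) n
      = T (\<lambda>k. ((harm k 1)^2 + harm k 2) / 2 / of_nat k / of_nat k) n"
    by (simp add: power2_eq_square mult.assoc)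
  also have "\<dots> = (\<Sum>m=1..n. T (\<lambda>k. ((harm k 1)^2 + harm k 2) / 2 / of_nat k) m / of_nat m)"
    by (rule LA)
  also have "\<dots> = (\<Sum>m=1..n. harm m 3 / of_nat m)" unfolding Tf3 ..
  finally show ?thesis .
qed

context fixes p :: nat assumes prp: "prime p" and p7: "p \<ge> 7"
begin

lemma p0: "p > 0" using prime_gt_0_nat[OF prp] .

lemma rc0_iff: "rat_cong a b p \<longleftrightarrow> rat_cong (a - b) 0 p"
  using rc_iff[OF prp] by simp

lemma rz_add: "rat_cong a 0 p \<Longrightarrow> rat_cong b 0 p \<Longrightarrow> rat_cong (a + b) 0 p"
  using rc_add[OF prp, of a 0 b 0] by simp
lemma rz_diff: "rat_cong a 0 p \<Longrightarrow> rat_cong b 0 p \<Longrightarrow> rat_cong (a - b) 0 p"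
  using rc_diff[OF prp, of a 0 b 0] by simp
lemma rz_multl: "p_integral p c \<Longrightarrow> rat_cong a 0 p \<Longrightarrow> rat_cong (c * a) 0 p"
  using rc_multc[OF prp, of a 0 c] by simp
lemma rz_multr: "p_integral p c \<Longrightarrow> rat_cong a 0 p \<Longrightarrow> rat_cong (a * c) 0 p"
  using rz_multl[of c a] by (simp add: mult.commute)
lemma rz_eq: "a = b \<Longrightarrow> rat_cong b 0 p \<Longrightarrow> rat_cong a 0 p" by simp
lemma rz_sum: "(\<And>k. k \<in> A \<Longrightarrow> rat_cong (f k) 0 p) \<Longrightarrow> rat_cong (sum f A) 0 p"
  using rc_sum[OF prp, of A f "\<lambda>_. 0"] by simp

lemma pint_rp: "0 < k \<Longrightarrow> k < p \<Longrightarrow> p_integral p (1 / of_nat k ^ m)"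
proof -
  assume k: "0 < k" "k < p"
  have "p_integral p ((1 / of_nat k) ^ m)" using pint_inv_nat[OF prp k] by (rule pint_power[OF prp])
  then show ?thesis by (simp add: power_one_over)
qed

lemma pint_harm: "k < p \<Longrightarrow> p_integral p (harm k m)"
  unfolding harm_def by (rule pint_sum[OF prp]) (rule pint_rp, auto)

lemma pint_divpow: "p_integral p x \<Longrightarrow> 0 < k \<Longrightarrow> k < p \<Longrightarrow> p_integral p (x / of_nat k ^ m)"
proof -
  assume a: "p_integral p x" "0 < k" "k < p"
  have "p_integral p (x * (1 / of_nat k ^ m))" using a pint_rp pint_mult[OF prp] by blast
  then show ?thesis by simp
qed

lemma hz: "1 \<le> m \<Longrightarrow> m \<le> 4 \<Longrightarrow> rat_cong (harm (p-1) m) 0 p"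
  by (rule harm_p0[OF prp p7])

lemma binom_cong: "k \<le> p - 1 \<Longrightarrow> int p dvd ((-1)^k * int (p - 1 choose k) - 1)"
proof (induction k)
  case 0
  then show ?case by simp
next
  case (Suc k)
  have psuc: "p = Suc (p - 1)" using p0 by simp
  have "Suc (p - 1) choose Suc k = (p - 1 choose k) + (p - 1 choose Suc k)" by (rule binomial_Suc_Suc)
  then have e: "p choose Suc k = (p - 1 choose k) + (p - 1 choose Suc k)" using psuc by simp
  have "p dvd (p choose Suc k)" using Suc.prems by (intro dvd_choose_prime[OF _ _ _ prp]) auto
  then have d: "int p dvd int (p choose Suc k)" by simp
  have "(-1)^Suc k * int (p - 1 choose Suc k) - 1
     = (-1)^Suc k * int (p choose Suc k) + ((-1)^k * int (p - 1 choose k) - 1)"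
    unfolding e by (simp add: algebra_simps)
  moreover have "int p dvd (-1)^Suc k * int (p choose Suc k)" using d by (rule dvd_mult)
  moreover have "int p dvd ((-1)^k * int (p - 1 choose k) - 1)" using Suc by simp
  ultimately show ?case by (simp only: dvd_add)
qed

lemma T_cong:
  assumes f: "\<And>k. k \<in> {1..p-1} \<Longrightarrow> p_integral p (f k)"
  shows "rat_cong (T f (p - 1) + (\<Sum>k=1..p-1. f k)) 0 p"
proof -
  have "T f (p - 1) + (\<Sum>k=1..p-1. f k) = (\<Sum>k=1..p-1. of_int (1 - (-1)^k * int (p - 1 choose k)) * f k)"
    unfolding T_def sum.distrib[symmetric]
  proof (rule sum.cong)
    fix k assume "k \<in> {1..p-1}"
    then obtain i where i: "k = Suc i" by (cases k) auto
    show "(-1)^(k-1) * of_nat (p - 1 choose k) * f k + f k = of_int (1 - (-1)^k * int (p - 1 choose k)) * f k"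
      unfolding i by (simp add: algebra_simps)
  qed simp
  moreover have "rat_cong (\<Sum>k=1..p-1. of_int (1 - (-1)^k * int (p - 1 choose k)) * f k) 0 p"
  proof (rule rz_sum)
    fix k assume k: "k \<in> {1..p-1}"
    have "int p dvd (1 - (-1)^k * int (p - 1 choose k))"
      using binom_cong[of k] k by (simp add: dvd_diff_commute)
    then have "rat_cong (of_int (1 - (-1)^k * int (p - 1 choose k))) 0 p" by (rule rc_int_dvd[OF prp])
    then show "rat_cong (of_int (1 - (-1)^k * int (p - 1 choose k)) * f k) 0 p"
      using f[OF k] by (intro rz_multr)
  qed
  ultimately show ?thesis by simp
qed

lemma recip_neg: "0 < m \<Longrightarrow> m < p \<Longrightarrow> rat_cong (1 / of_nat (p - m)) (- (1 / of_nat m)) p"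
proof -
  assume m: "0 < m" "m < p"
  have "1 / of_nat (p - m) - (- (1 / of_nat m)) = of_nat p * (1 / of_nat (p - m) * (1 / (of_nat m :: rat)))"
    using m by (simp add: field_simps of_nat_diff)
  moreover have "p_integral p (1 / of_nat (p - m) * (1 / of_nat m))"
    using m by (intro pint_mult[OF prp] pint_inv_nat[OF prp]) auto
  ultimately show ?thesis unfolding rat_cong_def by blast
qed

lemma Hrev: "j < p - 1 \<Longrightarrow> rat_cong (harm (p - Suc j) 1) (harm j 1) p"
proof (induction j)
  case 0
  then show ?case using hz[of 1] by simp
next
  case (Suc j)
  have e: "p - Suc j = Suc (p - Suc (Suc j))" using Suc.prems by simp
  have h: "harm (p - Suc (Suc j)) 1 = harm (p - Suc j) 1 - 1 / of_nat (p - Suc j)"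
    unfolding e harm_Suc by simp
  have "rat_cong (harm (p - Suc j) 1 - 1 / of_nat (p - Suc j)) (harm j 1 - (- (1 / of_nat (Suc j)))) p"
  proof (rule rc_diff[OF prp])
    show "rat_cong (harm (p - Suc j) 1) (harm j 1) p" using Suc by simp
    have "rat_cong (1 / of_nat (p - Suc j)) (- (1 / of_nat (Suc j))) p"
      using Suc.prems by (intro recip_neg) auto
    then show "rat_cong (1 / of_nat (p - Suc j)) (- (1 / of_nat (Suc j))) p" .
  qed
  moreover have "harm j 1 - (- (1 / of_nat (Suc j))) = harm (Suc j) 1" unfolding harm_Suc by simp
  ultimately show ?case unfolding h by simp
qed

end

context fixes p :: nat assumes prp: "prime p" and p7: "p \<ge> 7"
begin

lemma alg6: "(c::rat) \<noteq> 0 \<Longrightarrow> y * (- (1 / c)) ^ 3 = - ((y + (1 / c) ^ 1) / c ^ 3 - 1 / c ^ 4)"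
  by (simp add: field_simps eval_nat_numeral)

lemma A0: "rat_cong (\<Sum>k=1..p-1. harm k 1 / of_nat k ^ 3) 0 p"
proof -
  define A where "A = (\<Sum>k=1..p-1. harm k 1 / (of_nat k :: rat) ^ 3)"
  have p1: "p \<ge> 1" using p7 by simp
  have "A = (\<Sum>k=1..p-1. harm (p - k) 1 / of_nat (p - k) ^ 3)"
    unfolding A_def using p1 by (subst sum.atLeastAtMost_rev) simp
  moreover have "rat_cong (\<Sum>k=1..p-1. harm (p - k) 1 / of_nat (p - k) ^ 3)
     (\<Sum>k=1..p-1. harm (k - 1) 1 * (- (1 / of_nat k)) ^ 3) p"
  proof (rule rc_sum[OF prp])
    fix k assume k: "k \<in> {1..p-1}"
    then obtain j where j: "k = Suc j" "j < p - 1" by (cases k) auto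
    have k': "0 < k" "k < p" using k by auto
    have r1: "rat_cong (harm (p - k) 1) (harm (k - 1) 1) p" using Hrev[OF prp p7 j(2)] j by simp
    have r2: "rat_cong ((1 / of_nat (p - k)) ^ 3) ((- (1 / of_nat k)) ^ 3) p"
      using recip_neg[OF prp p7 k'] pint_inv_nat[OF prp k'] by (intro rc_power[OF prp] pint_minus[OF prp]) auto
    have "rat_cong (harm (p - k) 1 * (1 / of_nat (p - k)) ^ 3) (harm (k - 1) 1 * (- (1 / of_nat k)) ^ 3) p"
      using k' by (intro rc_mult[OF prp r1 r2] pint_harm[OF prp p7] pint_power[OF prp] pint_inv_nat[OF prp]) auto
    then show "rat_cong (harm (p - k) 1 / of_nat (p - k) ^ 3) (harm (k - 1) 1 * (- (1 / of_nat k)) ^ 3) p"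
      by (simp add: power_one_over)
  qed
  moreover have "(\<Sum>k=1..p-1. harm (k - 1) 1 * (- (1 / of_nat k)) ^ 3) = - (A - harm (p - 1) 4)"
  proof -
    have "(\<Sum>k=1..p-1. harm (k - 1) 1 * (- (1 / of_nat k)) ^ 3)
        = (\<Sum>k=1..p-1. - (harm k 1 / (of_nat k :: rat) ^ 3 - 1 / of_nat k ^ 4))"
    proof (rule sum.cong)
      fix k assume "k \<in> {1..p-1}"
      then obtain j where j: "k = Suc j" by (cases k) auto
      show "harm (k - 1) 1 * (- (1 / of_nat k)) ^ 3 = - (harm k 1 / (of_nat k :: rat) ^ 3 - 1 / of_nat k ^ 4)"
        unfolding j harm_Suc diff_Suc_1 by (rule alg6) simp
    qed simp
    also have "\<dots> = - (A - harm (p - 1) 4)"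
      unfolding A_def harm_def by (simp add: sum_subtractf sum_negf)
    finally show ?thesis .
  qed
  ultimately have c: "rat_cong A (- (A - harm (p - 1) 4)) p" by simp
  have "rat_cong (A - (- (A - harm (p - 1) 4)) + harm (p - 1) 4) 0 p"
  proof (rule rz_add[OF prp p7])
    show "rat_cong (A - (- (A - harm (p - 1) 4))) 0 p" using c rc0_iff[OF prp p7] by blast
    show "rat_cong (harm (p - 1) 4) 0 p" using hz[OF prp p7, of 4] by simp
  qed
  then have "rat_cong (of_int 2 * A) 0 p" by simp
  then have "rat_cong A 0 p" by (rule rc_cancel[OF prp]) (use ndvd_small[OF prp p7] in auto)
  then show ?thesis unfolding A_def .
qed

end

context fixes p :: nat assumes prp: "prime p" and p7: "p \<ge> 7"
begin

lemma main_all: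
  "rat_cong (\<Sum>k=1..p-1. (harm k 1)^2 / (of_nat k)^2) 0 p
 \<and> rat_cong (\<Sum>k=1..p-1. harm k 1 * harm k 2 / of_nat k) 0 p
 \<and> rat_cong (\<Sum>k=1..p-1. (harm k 1)^3 / of_nat k) 0 p"
proof -
  define n where "n = p - 1"
  have np: "n < p" "0 < n" using p7 unfolding n_def by auto
  have kr: "\<And>k. k \<in> {1..n} \<Longrightarrow> 0 < k \<and> k < p" using np by auto
  have pH: "\<And>m. p_integral p (harm n m)" using pint_harm[OF prp p7] np by blast
  have z: "\<And>m. 1 \<le> m \<Longrightarrow> m \<le> 4 \<Longrightarrow> rat_cong (harm n m) 0 p" unfolding n_def by (rule hz[OF prp p7])
  have d2: "\<not> int p dvd 2" using ndvd_small[OF prp p7] by auto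
  have pc: "p_integral p 2" "p_integral p 4" "p_integral p 6"
    using pint_int[OF prp, of 2] pint_int[OF prp, of 4] pint_int[OF prp, of 6] by simp_all
  define S1 where "S1 = (\<Sum>k=1..n. (harm k 1)^2 / (of_nat k :: rat)^2)"
  define S2 where "S2 = (\<Sum>k=1..n. harm k 1 * harm k 2 / (of_nat k :: rat))"
  define S3 where "S3 = (\<Sum>k=1..n. (harm k 1)^3 / (of_nat k :: rat))"
  define A where "A = (\<Sum>k=1..n. harm k 1 / (of_nat k :: rat)^3)"
  define Bp where "Bp = (\<Sum>k=1..n. harm k 3 / (of_nat k :: rat))"
  define Q where "Q = (\<Sum>k=1..n. harm k 2 / (of_nat k :: rat)^2)"
  define F where "F = (\<Sum>k=1..n. ((harm k 1)^2 + harm k 2) / 2 / (of_nat k :: rat)^2)"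
  have zA: "rat_cong A 0 p" unfolding A_def n_def by (rule A0[OF prp p7])
  have e4: "Bp + A = harm n 1 * harm n 3 + harm n 4"
    using E4c[of n] unfolding Bp_def A_def by (simp add: sum.distrib)
  have zB: "rat_cong Bp 0 p"
  proof -
    have "rat_cong (harm n 1 * harm n 3 + harm n 4 - A) 0 p"
      using z zA pH by (intro rz_diff[OF prp p7] rz_add[OF prp p7] rz_multr[OF prp p7]) auto
    moreover have "Bp = harm n 1 * harm n 3 + harm n 4 - A" using e4 by simp
    ultimately show ?thesis by simp
  qed
  have zF: "rat_cong F 0 p"
  proof -
    have "rat_cong (T (\<lambda>k. ((harm k 1)^2 + harm k 2) / 2 / (of_nat k)^2) (p - 1)
       + (\<Sum>k=1..p-1. ((harm k 1)^2 + harm k 2) / 2 / (of_nat k)^2)) 0 p"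
    proof (rule T_cong[OF prp p7])
      fix k assume "k \<in> {1..p-1}"
      then have k: "0 < k" "k < p" by auto
      show "p_integral p (((harm k 1)^2 + harm k 2) / 2 / (of_nat k)^2)"
        using k pint_harm[OF prp p7, of k]
        by (intro pint_divpow[OF prp p7] pint_div_int[OF prp, where c=2, simplified] pint_add[OF prp] pint_power[OF prp])
           (auto simp: d2)
    qed
    then have "rat_cong (Bp + F) 0 p" unfolding dual Bp_def F_def n_def .
    then have "rat_cong (Bp + F - Bp) 0 p" using zB by (rule rz_diff[OF prp p7])
    then show ?thesis by simp
  qed
  have zQ: "rat_cong Q 0 p"
  proof -
    have "2 * Q = (harm n 2)^2 + harm n 4"
      using E3c[of n] unfolding Q_def by (simp add: sum_distrib_left)
    moreover have "rat_cong ((harm n 2)^2 + harm n 4) 0 p"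
      unfolding power2_eq_square using z pH by (intro rz_add[OF prp p7] rz_multr[OF prp p7]) auto
    ultimately have "rat_cong (of_int 2 * Q) 0 p" by simp
    then show ?thesis by (rule rc_cancel[OF prp _ d2])
  qed
  have e5: "2 * F = S1 + Q"
    unfolding F_def S1_def Q_def sum_distrib_left sum.distrib[symmetric]
    by (rule sum.cong) (simp_all add: field_simps)
  have zS1: "rat_cong S1 0 p"
  proof -
    have "rat_cong (2 * F - Q) 0 p" using zF zQ pc by (intro rz_diff[OF prp p7] rz_multl[OF prp p7]) auto
    moreover have "S1 = 2 * F - Q" using e5 by simp
    ultimately show ?thesis by simp
  qed
  have e2: "S1 + 2 * S2 - 2 * A - Q = (harm n 1)^2 * harm n 2 - harm n 4"
    using E2c[of n] unfolding S1_def S2_def A_def Q_def by (simp add: sum.distrib sum_subtractf sum_distrib_left)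
  have zS2: "rat_cong S2 0 p"
  proof -
    have "rat_cong (((harm n 1)^2 * harm n 2 - harm n 4) - S1 + 2 * A + Q) 0 p"
      using z zS1 zA zQ pH pc unfolding power2_eq_square
      by (intro rz_add[OF prp p7] rz_diff[OF prp p7] rz_multr[OF prp p7] rz_multl[OF prp p7] pint_mult[OF prp]) auto
    moreover have "of_int 2 * S2 = ((harm n 1)^2 * harm n 2 - harm n 4) - S1 + 2 * A + Q" using e2 by simp
    ultimately have "rat_cong (of_int 2 * S2) 0 p" by simp
    then show ?thesis by (rule rc_cancel[OF prp _ d2])
  qed
  have e1: "4 * S3 - 6 * S1 + 4 * A = (harm n 1)^4 + harm n 4"
    using E1c[of n] unfolding S1_def S3_def A_def by (simp add: sum.distrib sum_subtractf sum_distrib_left)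
  have zS3: "rat_cong S3 0 p"
  proof -
    have "(harm n 1)^4 = harm n 1 * harm n 1 ^ 3" by (simp add: eval_nat_numeral)
    moreover have "rat_cong (harm n 1 * harm n 1 ^ 3) 0 p"
      by (rule rz_multr[OF prp p7]) (use pH z[of 1] pint_power[OF prp] in auto)
    ultimately have h4: "rat_cong ((harm n 1)^4) 0 p" by simp
    have "rat_cong ((harm n 1)^4 + harm n 4 + 6 * S1 - 4 * A) 0 p"
      using z zS1 zA pH h4 pc
      by (intro rz_add[OF prp p7] rz_diff[OF prp p7] rz_multl[OF prp p7]) auto
    moreover have "of_int 2 * (2 * S3) = (harm n 1)^4 + harm n 4 + 6 * S1 - 4 * A" using e1 by simp
    ultimately have "rat_cong (of_int 2 * (2 * S3)) 0 p" by simp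
    then have "rat_cong (2 * S3) 0 p" by (rule rc_cancel[OF prp _ d2])
    then have "rat_cong (of_int 2 * S3) 0 p" by simp
    then show ?thesis by (rule rc_cancel[OF prp _ d2])
  qed
  show ?thesis using zS1 zS2 zS3 unfolding S1_def S2_def S3_def n_def by simp
qed

end

theorem lemma2p9:
  fixes p :: nat
  assumes "prime p" and "p \<ge> 7"
  shows "rat_cong (\<Sum>k=1..p-1. (harm k 1)^2 / (of_nat k)^2) 0 p
       \<and> rat_cong (\<Sum>k=1..p-1. harm k 1 * harm k 2 / of_nat k) 0 p
       \<and> rat_cong (\<Sum>k=1..p-1. (harm k 1)^3 / of_nat k) 0 p"
  by (rule main_all[OF assms])

end
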